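(* Let $\frac12\le M<\frac23$ and consider Algorithm C on an input whose optimal offline makespan is $1$. If job $j$ is handled by Step 5, then with $\gamma_j=y_{j-1}+p_j-(2-M)$ the chosen set $W$ satisfies $\gamma_j\le w_j\le M\cdot p_j$.
   Context: Model (two hierarchical machines with migration, bin stretching). Jobs $1,2,\dots,n$ arrive one by one. Job $j$ has a size $p_j>0$ and a grade of service (GoS) $g_j\in\{1,2\}$; a job of GoS $1$ may only be processed on machine $m_1$, a job of GoS $2$ may be processed on $m_1$ or on $m_2$. When job $j$ arrives, the algorithm must assign it, and may migrate previously arrived jobs (respecting GoS) of total size at most $M\cdot p_j$. The optimal offline makespan of the complete input is known in advance and scaled to $1$. Notation: $Y_{j}$ is the set of jobs on $m_2$ just after job $j$ has been handled, $y_j$ its total size, $y_0=0$; $p^{\max Y}_j$ is the largest size of a job in $Y_{j-1}$ ($0$ if empty); "sorted $Y_{j-1}$" lists $Y_{j-1}$ in non-increasing order of size; $w_j$ is the total size of the chosen set $W$. Algorithm C (parameter $M$). On arrival of job $j$: Step 2: if $g_j=1$ or $y_{j-1}\ge M$, assign $j$ to $m_1$. Step 3: else if $y_{j-1}+p_j\le 2-M$, assign $j$ to $m_2$. Step 4: else if $p^{\max Y}_j>M\cdot p_j$, assign $j$ to $m_1$. Step 5: otherwise let $W$ be the shortest prefix of sorted $Y_{j-1}$ with total size at least $p_j+y_{j-1}-(2-M)$ (or $W=Y_{j-1}$ if none exists); migrate the jobs of $W$ to $m_1$ and assign $j$ to $m_2$. *)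

theory Defs
  imports Main "HOL-Library.Multiset" Complex_Main
begin

text \<open>Jobs are indexed 1..n; job j has size p j and GoS g j (1 or 2).
  Machine m1 is encoded as 1, machine m2 as 2.\<close>

definition valid_input :: "nat \<Rightarrow> (nat \<Rightarrow> real) \<Rightarrow> (nat \<Rightarrow> nat) \<Rightarrow> bool" where
  "valid_input n p g \<longleftrightarrow> (\<forall>j\<in>{1..n}. p j > 0 \<and> g j \<in> {1,2})"

definition valid_schedule :: "nat \<Rightarrow> (nat \<Rightarrow> nat) \<Rightarrow> (nat \<Rightarrow> nat) \<Rightarrow> bool" where
  "valid_schedule n g \<sigma> \<longleftrightarrow> (\<forall>j\<in>{1..n}. \<sigma> j \<in> {1,2} \<and> (g j = 1 \<longrightarrow> \<sigma> j = 1))"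

definition load :: "nat \<Rightarrow> (nat \<Rightarrow> real) \<Rightarrow> (nat \<Rightarrow> nat) \<Rightarrow> nat \<Rightarrow> real" where
  "load n p \<sigma> i = (\<Sum>j\<in>{j\<in>{1..n}. \<sigma> j = i}. p j)"

definition makespan :: "nat \<Rightarrow> (nat \<Rightarrow> real) \<Rightarrow> (nat \<Rightarrow> nat) \<Rightarrow> real" where
  "makespan n p \<sigma> = max (load n p \<sigma> 1) (load n p \<sigma> 2)"

definition opt_is_one :: "nat \<Rightarrow> (nat \<Rightarrow> real) \<Rightarrow> (nat \<Rightarrow> nat) \<Rightarrow> bool" where
  "opt_is_one n p g \<longleftrightarrow>
     (\<exists>\<sigma>. valid_schedule n g \<sigma> \<and> makespan n p \<sigma> = 1) \<and>
     (\<forall>\<sigma>. valid_schedule n g \<sigma> \<longrightarrow> makespan n p \<sigma> \<ge> 1)"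

definition pmax :: "(nat \<Rightarrow> real) \<Rightarrow> nat set \<Rightarrow> real" where
  "pmax p Y = (if Y = {} then 0 else Max (p ` Y))"

definition sorted_listing :: "(nat \<Rightarrow> real) \<Rightarrow> nat set \<Rightarrow> nat list \<Rightarrow> bool" where
  "sorted_listing p Y L \<longleftrightarrow> distinct L \<and> set L = Y \<and> sorted_wrt (\<lambda>a b. p a \<ge> p b) L"

definition prefix_choice :: "(nat \<Rightarrow> real) \<Rightarrow> nat list \<Rightarrow> real \<Rightarrow> nat set" where
  "prefix_choice p L t =
     (if \<exists>k\<le>length L. sum_list (map p (take k L)) \<ge> t
      then set (take (LEAST k. k \<le> length L \<and> sum_list (map p (take k L)) \<ge> t) L)
      else set L)"

text \<open>Step 5 applies to job j = Suc i when Y is the content of m2 after job i.\<close>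
definition step5_applies :: "real \<Rightarrow> (nat \<Rightarrow> real) \<Rightarrow> (nat \<Rightarrow> nat) \<Rightarrow> nat \<Rightarrow> nat set \<Rightarrow> bool" where
  "step5_applies M p g j Y \<longleftrightarrow>
     \<not> (g j = 1 \<or> sum p Y \<ge> M) \<and> \<not> (sum p Y + p j \<le> 2 - M) \<and> \<not> (pmax p Y > M * p j)"

text \<open>Possible contents Y of machine m2 after job j has been handled by Algorithm C
  (over all tie-breaking choices in sorting).\<close>
inductive alg_state :: "real \<Rightarrow> (nat \<Rightarrow> real) \<Rightarrow> (nat \<Rightarrow> nat) \<Rightarrow> nat \<Rightarrow> nat set \<Rightarrow> bool"
  for M p g where
  init: "alg_state M p g 0 {}"
| step2: "alg_state M p g j Y \<Longrightarrow> g (Suc j) = 1 \<or> sum p Y \<ge> M \<Longrightarrow>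
          alg_state M p g (Suc j) Y"
| step3: "alg_state M p g j Y \<Longrightarrow> \<not> (g (Suc j) = 1 \<or> sum p Y \<ge> M) \<Longrightarrow>
          sum p Y + p (Suc j) \<le> 2 - M \<Longrightarrow>
          alg_state M p g (Suc j) (insert (Suc j) Y)"
| step4: "alg_state M p g j Y \<Longrightarrow> \<not> (g (Suc j) = 1 \<or> sum p Y \<ge> M) \<Longrightarrow>
          \<not> (sum p Y + p (Suc j) \<le> 2 - M) \<Longrightarrow> pmax p Y > M * p (Suc j) \<Longrightarrow>
          alg_state M p g (Suc j) Y"
| step5: "alg_state M p g j Y \<Longrightarrow> step5_applies M p g (Suc j) Y \<Longrightarrow>
          sorted_listing p Y L \<Longrightarrow>
          alg_state M p g (Suc j)
            (insert (Suc j) (Y - prefix_choice p L (p (Suc j) + sum p Y - (2 - M))))"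

end

theory Submission
  imports Defs
begin

lemma alg_state_sub: "alg_state M p g i Y \<Longrightarrow> Y \<subseteq> {1..i}"
  by (induction rule: alg_state.induct) auto

lemma pj_le1:
  assumes "valid_input n p g" "opt_is_one n p g" "j \<in> {1..n}"
  shows "p j \<le> 1"
proof -
  obtain \<sigma> where s: "valid_schedule n g \<sigma>" "makespan n p \<sigma> = 1"
    using assms(2) unfolding opt_is_one_def by blast
  let ?A = "{k\<in>{1..n}. \<sigma> k = \<sigma> j}"
  have "\<sigma> j \<in> {1,2}" using s(1) assms(3) unfolding valid_schedule_def by auto
  hence "load n p \<sigma> (\<sigma> j) \<le> 1" using s(2) unfolding makespan_def by auto
  moreover have "p j \<le> load n p \<sigma> (\<sigma> j)" unfolding load_def
    apply (rule member_le_sum) using assms(1,3) unfolding valid_input_def by (auto intro: less_imp_le)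
  ultimately show ?thesis by linarith
qed

theorem mainTheorem11:
  fixes M :: real and n :: nat and p :: "nat \<Rightarrow> real" and g :: "nat \<Rightarrow> nat"
    and j :: nat and Y :: "nat set" and L :: "nat list"
  assumes "1/2 \<le> M" and "M < 2/3"
    and "valid_input n p g"
    and "opt_is_one n p g"
    and "j \<in> {1..n}"
    and "alg_state M p g (j - 1) Y"
    and "step5_applies M p g j Y"
    and "sorted_listing p Y L"
  shows "sum p Y + p j - (2 - M) \<le> sum p (prefix_choice p L (p j + sum p Y - (2 - M)))
       \<and> sum p (prefix_choice p L (p j + sum p Y - (2 - M))) \<le> M * p j"
proof -
  define t where "t = p j + sum p Y - (2 - M)"
  have pj: "p j \<le> 1" using pj_le1 assms(3,4,5) .
  have Ysub: "Y \<subseteq> {1..n}" using alg_state_sub[OF assms(6)] assms(5) by force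
  have pos: "\<And>x. x \<in> Y \<Longrightarrow> p x > 0" using Ysub assms(3) unfolding valid_input_def by auto
  have dL: "distinct L" and sL: "set L = Y" and soL: "sorted_wrt (\<lambda>a b. p a \<ge> p b) L"
    using assms(8) unfolding sorted_listing_def by auto
  have st: "\<not> sum p Y \<ge> M" "\<not> sum p Y + p j \<le> 2 - M" "\<not> pmax p Y > M * p j"
    using assms(7) unfolding step5_applies_def by auto
  have sumL: "sum_list (map p L) = sum p Y" using sum_list_distinct_conv_sum_set[OF dL] sL by simp
  have ex: "\<exists>k\<le>length L. sum_list (map p (take k L)) \<ge> t"
    by (rule exI[of _ "length L"]) (use sumL pj assms(2) t_def in auto)
  define K where "K = (LEAST k. k \<le> length L \<and> sum_list (map p (take k L)) \<ge> t)"
  have PC: "prefix_choice p L t = set (take K L)" using ex unfolding prefix_choice_def K_def by simp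
  have KL: "K \<le> length L" and Kt: "sum_list (map p (take K L)) \<ge> t"
    using LeastI_ex[OF ex] unfolding K_def by auto
  have sumK: "sum p (set (take K L)) = sum_list (map p (take K L))"
    using sum_list_distinct_conv_sum_set[of "take K L" p] dL by simp
  have upper: "sum_list (map p (take K L)) \<le> M * p j"
  proof (cases "K = 0")
    case True thus ?thesis using pos assms(1,5,3) unfolding valid_input_def
      by (simp add: mult_nonneg_nonneg less_imp_le)
  next
    case False
    have L0: "L \<noteq> []" using False KL by auto
    have Yne: "Y \<noteq> {}" using L0 sL by auto
    have finY: "finite Y" using sL by auto
    have p0: "p (L!0) \<le> M * p j"
    proof -
      have "L!0 \<in> Y" using L0 sL by (metis length_greater_0_conv nth_mem)
      hence "p (L!0) \<le> Max (p ` Y)" using finY by auto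
      thus ?thesis using st(3) Yne unfolding pmax_def by auto
    qed
    show ?thesis
    proof (cases "K = 1")
      case True
      hence "take K L = [L!0]" using L0 by (cases L) auto
      thus ?thesis using p0 by simp
    next
      case False2: False
      have K2: "K \<ge> 2" using False False2 by auto
      have "\<not> (K - 1 \<le> length L \<and> sum_list (map p (take (K-1) L)) \<ge> t)"
        using not_less_Least[of "K-1" "\<lambda>k. k \<le> length L \<and> sum_list (map p (take k L)) \<ge> t"] K2 unfolding K_def[symmetric] by auto
      hence lt: "sum_list (map p (take (K-1) L)) < t" using KL by auto
      have tk: "take K L = take (K-1) L @ [L!(K-1)]"
        using KL K2 by (metis Suc_diff_1 Suc_le_lessD less_le_trans not_less_eq_eq numeral_2_eq_2 pos2 take_Suc_conv_app_nth)
      have le0: "p (L!(K-1)) \<le> p (L!0)"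
        using sorted_wrt_nth_less[OF soL, of 0 "K-1"] K2 KL by auto
      obtain r where r: "take (K-1) L = L!0 # r"
        using K2 L0 by (cases L; cases "K-1") auto
      have "set r \<subseteq> Y" using r sL by (metis in_set_takeD set_subset_Cons subset_code(1))
      hence "sum_list (map p r) \<ge> 0" using pos by (intro sum_list_nonneg) (auto intro: less_imp_le)
      hence "p (L!0) \<le> sum_list (map p (take (K-1) L))" using r by simp
      hence "sum_list (map p (take K L)) < 2 * t" using tk le0 lt by simp
      also have "2 * t \<le> M * p j"
      proof -
        have "(2 - M) * p j \<le> 2 - M" using pj assms(2) by (simp add: mult_le_cancel_left1)
        thus ?thesis unfolding t_def using st(1) assms(2) by (simp add: algebra_simps)
      qed
      finally show ?thesis by simp
    qed
  qed
  show ?thesis using PC sumK Kt upper unfolding t_def[symmetric] by (simp add: t_def algebra_simps)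
qed

end
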